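(* Let $A$ be a $d\times n$ integer matrix of rank $d$ and let $\tilde A$ be the $(d+1)\times(n+1)$ integer matrix whose first row is $(1,\ldots,1)$ and whose remaining rows are $(a_{i1},\ldots,a_{in},0)$, $i=1,\ldots,d$. Let $\tilde w=(1,\ldots,1,0)\in\mathbf{R}^{n+1}$. Then for any $\varepsilon>0$ there exists $\tilde v\in\mathbf{R}^{n+1}$ with $\tilde v_{n+1}=0$ such that $\tilde w+\varepsilon\tilde v$ lies in the interior of a maximal dimensional Gröbner cone of the toric ideal $I_{\tilde A}$.
   Context: For an integer matrix $M$ with columns $m_1,\ldots,m_N$, the toric ideal $I_M\subset\mathbf{C}[\partial_1,\ldots,\partial_N]$ is the ideal generated by $\partial^u-\partial^v$ for $u,v\in\mathbf{Z}_{\ge0}^N$ with $Mu=Mv$. The Gröbner cones of $I_M$ are the cones of the Gröbner fan of $I_M$ (the sets of weight vectors inducing the same initial ideal). *)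

theory Defs
  imports "HOL-Analysis.Analysis" "HOL-Library.Poly_Mapping"
begin

type_synonym 'v mpoly = "('v \<Rightarrow>\<^sub>0 nat) \<Rightarrow>\<^sub>0 complex"

definition monom :: "('v \<Rightarrow>\<^sub>0 nat) \<Rightarrow> 'v mpoly" where
  "monom u = Poly_Mapping.single u 1"

definition is_ideal :: "'a::comm_ring_1 set \<Rightarrow> bool" where
  "is_ideal J \<longleftrightarrow> 0 \<in> J \<and> (\<forall>a\<in>J. \<forall>b\<in>J. a + b \<in> J) \<and> (\<forall>r. \<forall>a\<in>J. r * a \<in> J)"

definition ideal_gen :: "'a::comm_ring_1 set \<Rightarrow> 'a set" where
  "ideal_gen S = \<Inter>{J. is_ideal J \<and> S \<subseteq> J}"

definition mat_mult_exp :: "int^'v^'r \<Rightarrow> ('v::finite \<Rightarrow>\<^sub>0 nat) \<Rightarrow> int^'r" where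
  "mat_mult_exp M u = (\<chi> r. \<Sum>j\<in>UNIV. M $ r $ j * int (Poly_Mapping.lookup u j))"

definition toric_ideal :: "int^'v^'r \<Rightarrow> ('v::finite) mpoly set" where
  "toric_ideal M = ideal_gen {monom u - monom v | u v. mat_mult_exp M u = mat_mult_exp M v}"

definition wdeg :: "real^'v \<Rightarrow> ('v::finite \<Rightarrow>\<^sub>0 nat) \<Rightarrow> real" where
  "wdeg w u = (\<Sum>j\<in>UNIV. w $ j * real (Poly_Mapping.lookup u j))"

definition init_form :: "real^'v \<Rightarrow> ('v::finite) mpoly \<Rightarrow> 'v mpoly" where
  "init_form w f =
     (let m = Max (wdeg w ` Poly_Mapping.keys f) in
      (\<Sum>u\<in>{u \<in> Poly_Mapping.keys f. wdeg w u = m}. Poly_Mapping.single u (Poly_Mapping.lookup f u)))"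

definition init_ideal :: "real^'v \<Rightarrow> ('v::finite) mpoly set \<Rightarrow> 'v mpoly set" where
  "init_ideal w I = ideal_gen (init_form w ` I)"

definition groebner_cone :: "('v::finite) mpoly set \<Rightarrow> real^'v \<Rightarrow> (real^'v) set" where
  "groebner_cone I w = {w'. init_ideal w' I = init_ideal w I}"

definition groebner_cones :: "('v::finite) mpoly set \<Rightarrow> (real^'v) set set" where
  "groebner_cones I = range (groebner_cone I)"

definition maximal_dim :: "(real^'v::finite) set \<Rightarrow> bool" where
  "maximal_dim C \<longleftrightarrow> aff_dim C = int CARD('v)"

text \<open>The homogenized matrix tilde A: columns 'n option (None = new last column),
  rows 'd option (None = new first row of ones).\<close>
definition homog_mat :: "int^'n::finite^'d::finite \<Rightarrow> int^('n option)^('d option)" where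
  "homog_mat A = (\<chi> r j. case r of None \<Rightarrow> 1
                    | Some i \<Rightarrow> (case j of None \<Rightarrow> 0 | Some j' \<Rightarrow> A $ i $ j'))"

definition homog_weight :: "real^('n::finite option)" where
  "homog_weight = (\<chi> j. case j of None \<Rightarrow> 0 | Some _ \<Rightarrow> 1)"

end

theory Submission
  imports Defs
begin


lemma is_ideal_ideal_gen: "is_ideal (ideal_gen S)"
  unfolding is_ideal_def ideal_gen_def by auto
lemma ideal_gen_sub: "S \<subseteq> ideal_gen S" unfolding ideal_gen_def by auto
lemma ideal_gen_least: "is_ideal J \<Longrightarrow> S \<subseteq> J \<Longrightarrow> ideal_gen S \<subseteq> J"
  unfolding ideal_gen_def by auto
lemma is_ideal_sum: assumes "is_ideal J" "finite X" "\<forall>x\<in>X. f x \<in> J" shows "sum f X \<in> J"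
  using assms(2,3) proof (induction X rule: finite_induct)
  case empty then show ?case using assms(1) by (simp add: is_ideal_def)
next
  case (insert x F) then show ?case using assms(1) by (simp add: is_ideal_def)
qed

lemma poly_expand: "f = (\<Sum>u\<in>Poly_Mapping.keys f. Poly_Mapping.single u (Poly_Mapping.lookup f u))"
proof (rule poly_mapping_eqI)
  fix k
  show "Poly_Mapping.lookup f k = Poly_Mapping.lookup (\<Sum>u\<in>Poly_Mapping.keys f. Poly_Mapping.single u (Poly_Mapping.lookup f u)) k"
    by (cases "k \<in> Poly_Mapping.keys f")
       (auto simp: lookup_sum lookup_single when_def in_keys_iff)
qed

definition Lc :: "('a \<Rightarrow> 'c) \<Rightarrow> 'c \<Rightarrow> ('a \<Rightarrow>\<^sub>0 'b::comm_monoid_add) \<Rightarrow> 'b" where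
  "Lc \<phi> c f = (\<Sum>u\<in>Poly_Mapping.keys f. if \<phi> u = c then Poly_Mapping.lookup f u else 0)"

lemma Lc_add: "Lc \<phi> c (f + g) = Lc \<phi> c f + Lc \<phi> c g"
  unfolding Lc_def by (rule setsum_keys_plus_distrib) auto

lemma Lc_zero[simp]: "Lc \<phi> c 0 = 0" unfolding Lc_def by simp

lemma Lc_single: "Lc \<phi> c (Poly_Mapping.single b y) = (if \<phi> b = c then y else 0)"
  unfolding Lc_def by auto

lemma Lc_sum: "finite X \<Longrightarrow> Lc \<phi> c (sum f X) = (\<Sum>x\<in>X. Lc \<phi> c (f x))"
  by (induction X rule: finite_induct) (auto simp: Lc_add)

lemma Lc_uminus: "Lc \<phi> c (- f) = - Lc \<phi> c (f :: 'a \<Rightarrow>\<^sub>0 'b::ab_group_add)"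
proof -
  have "Lc \<phi> c (f + - f) = 0" by simp
  then show ?thesis unfolding Lc_add by (simp add: eq_neg_iff_add_eq_0 add.commute)
qed

lemma Lc_diff: "Lc \<phi> c (f - g) = Lc \<phi> c f - Lc \<phi> c (g :: 'a \<Rightarrow>\<^sub>0 'b::ab_group_add)"
  using Lc_add[of \<phi> c f "-g"] Lc_uminus[of \<phi> c g] by simp

lemma Lc_mult:
  fixes r f :: "('a::comm_monoid_add \<Rightarrow>\<^sub>0 'b::comm_ring_1)" and \<phi> :: "'a \<Rightarrow> 'c::ab_group_add"
  assumes add: "\<And>a b. \<phi> (a + b) = \<phi> a + \<phi> b"
  shows "Lc \<phi> c (r * f) = (\<Sum>a\<in>Poly_Mapping.keys r. Poly_Mapping.lookup r a * Lc \<phi> (c - \<phi> a) f)"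
proof -
  have "r * f = (\<Sum>a\<in>Poly_Mapping.keys r. Poly_Mapping.single a (Poly_Mapping.lookup r a)) *
               (\<Sum>q\<in>Poly_Mapping.keys f. Poly_Mapping.single q (Poly_Mapping.lookup f q))"
    using poly_expand[of r] poly_expand[of f] by simp
  also have "\<dots> = (\<Sum>a\<in>Poly_Mapping.keys r. \<Sum>q\<in>Poly_Mapping.keys f.
         Poly_Mapping.single (a + q) (Poly_Mapping.lookup r a * Poly_Mapping.lookup f q))"
    by (simp add: sum_product mult_single)
  finally have "Lc \<phi> c (r * f) = (\<Sum>a\<in>Poly_Mapping.keys r. \<Sum>q\<in>Poly_Mapping.keys f.
        (if \<phi> (a + q) = c then Poly_Mapping.lookup r a * Poly_Mapping.lookup f q else 0))"
    by (simp add: Lc_sum Lc_single)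
  also have "\<dots> = (\<Sum>a\<in>Poly_Mapping.keys r. Poly_Mapping.lookup r a * (\<Sum>q\<in>Poly_Mapping.keys f.
        (if \<phi> q = c - \<phi> a then Poly_Mapping.lookup f q else 0)))"
    by (auto simp: sum_distrib_left add algebra_simps intro!: sum.cong)
  finally show ?thesis by (simp add: Lc_def)
qed

definition fiberP :: "('a \<Rightarrow> 'c) \<Rightarrow> ('a \<Rightarrow>\<^sub>0 'b::comm_monoid_add) set" where
  "fiberP \<phi> = {f. \<forall>c. Lc \<phi> c f = 0}"

lemma is_ideal_fiberP:
  fixes \<phi> :: "'a::comm_monoid_add \<Rightarrow> 'c::ab_group_add"
  assumes add: "\<And>a b. \<phi> (a + b) = \<phi> a + \<phi> b"
  shows "is_ideal (fiberP \<phi> :: ('a \<Rightarrow>\<^sub>0 'b::comm_ring_1) set)"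
  unfolding is_ideal_def fiberP_def
  by (auto simp: Lc_add Lc_mult[OF add])



lemma nat_mono_subseq:
  fixes s :: "nat \<Rightarrow> nat"
  shows "\<exists>f::nat\<Rightarrow>nat. strict_mono f \<and> (\<forall>m n. m \<le> n \<longrightarrow> s (f m) \<le> s (f n))"
proof -
  obtain f where f: "strict_mono f" "monoseq (\<lambda>n. s (f n))" using seq_monosub by blast
  show ?thesis
  proof (cases "\<forall>m n. m \<le> n \<longrightarrow> s (f m) \<le> s (f n)")
    case True then show ?thesis using f by blast
  next
    case False
    then have dec: "\<forall>m n. m \<le> n \<longrightarrow> s (f n) \<le> s (f m)" using f(2) unfolding monoseq_def by auto
    obtain k where k: "\<forall>j. s (f k) \<le> s (f j)"
      using ex_has_least_nat[of "\<lambda>_. True" _ "\<lambda>k. s (f k)"] by blast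
    have eq: "\<And>j. s (f (j + k)) = s (f k)" using k dec by (meson le_add2 le_antisym)
    have "strict_mono (\<lambda>j. f (j + k))" using f(1) unfolding strict_mono_def by simp
    then show ?thesis using eq by (intro exI[of _ "\<lambda>j. f (j + k)"]) simp
  qed
qed

lemma dickson_subseq:
  fixes s :: "nat \<Rightarrow> ('v \<Rightarrow>\<^sub>0 nat)"
  assumes "finite D"
  shows "\<exists>f::nat\<Rightarrow>nat. strict_mono f \<and> (\<forall>j\<in>D. \<forall>m n. m \<le> n \<longrightarrow>
            Poly_Mapping.lookup (s (f m)) j \<le> Poly_Mapping.lookup (s (f n)) j)"
  using assms
proof (induction D rule: finite_induct)
  case empty
  then show ?case by (intro exI[of _ id]) (auto simp: strict_mono_def)
next
  case (insert x F)
  then obtain f :: "nat \<Rightarrow> nat" where f: "strict_mono f" "\<forall>j\<in>F. \<forall>m n. m \<le> n \<longrightarrow>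
            Poly_Mapping.lookup (s (f m)) j \<le> Poly_Mapping.lookup (s (f n)) j" by blast
  obtain g :: "nat \<Rightarrow> nat" where g: "strict_mono g" "\<forall>m n. m \<le> n \<longrightarrow>
     Poly_Mapping.lookup (s (f (g m))) x \<le> Poly_Mapping.lookup (s (f (g n))) x"
    using nat_mono_subseq[of "\<lambda>k. Poly_Mapping.lookup (s (f k)) x"] by blast
  have sm: "strict_mono (f \<circ> g)" using f(1) g(1) by (simp add: strict_mono_def)
  have "\<forall>j\<in>F. \<forall>m n. m \<le> n \<longrightarrow>
     Poly_Mapping.lookup (s (f (g m))) j \<le> Poly_Mapping.lookup (s (f (g n))) j"
    using f(2) g(1) by (meson strict_mono_less_eq)
  then show ?case using sm g(2) by (intro exI[of _ "f \<circ> g"]) (auto simp: o_def)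
qed

definition ple :: "('v \<Rightarrow>\<^sub>0 nat) \<Rightarrow> ('v \<Rightarrow>\<^sub>0 nat) \<Rightarrow> bool" where
  "ple u v \<longleftrightarrow> (\<forall>j. Poly_Mapping.lookup u j \<le> Poly_Mapping.lookup v j)"

lemma dickson_good:
  fixes s :: "nat \<Rightarrow> ('v::finite \<Rightarrow>\<^sub>0 nat)"
  shows "\<exists>i j. i < j \<and> ple (s i) (s j)"
proof -
  have fin: "finite (UNIV :: 'v set)" by simp
  obtain f :: "nat \<Rightarrow> nat" where f: "strict_mono f" "\<forall>j\<in>UNIV. \<forall>m n. m \<le> n \<longrightarrow>
            Poly_Mapping.lookup (s (f m)) j \<le> Poly_Mapping.lookup (s (f n)) j"
    using dickson_subseq[OF fin, of s] by blast
  have "f 0 < f 1" using f(1) by (simp add: strict_mono_def)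
  moreover have "ple (s (f 0)) (s (f 1))" unfolding ple_def using f(2) by simp
  ultimately show ?thesis by blast
qed

definition psize :: "('v::finite \<Rightarrow>\<^sub>0 nat) \<Rightarrow> nat" where
  "psize u = (\<Sum>j\<in>UNIV. Poly_Mapping.lookup u j)"

lemma ple_psize: "ple u v \<Longrightarrow> u \<noteq> v \<Longrightarrow> psize u < psize (v::'v::finite \<Rightarrow>\<^sub>0 nat)"
proof -
  assume a: "ple u v" "u \<noteq> v"
  have "\<exists>j. Poly_Mapping.lookup u j \<noteq> Poly_Mapping.lookup v j"
  proof (rule ccontr)
    assume "\<not> ?thesis"
    then have "u = v" by (intro poly_mapping_eqI) simp
    then show False using a(2) by simp
  qed
  then obtain j where j: "Poly_Mapping.lookup u j \<noteq> Poly_Mapping.lookup v j" by blast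
  have le: "\<forall>x\<in>UNIV. Poly_Mapping.lookup u x \<le> Poly_Mapping.lookup v x"
    using a(1) unfolding ple_def by blast
  then have "Poly_Mapping.lookup u j < Poly_Mapping.lookup v j" using j
    by (simp add: order_less_le)
  then show ?thesis unfolding psize_def using le
    by (intro sum_strict_mono_ex1) (simp_all, blast)
qed

lemma dickson_finite_basis:
  fixes M :: "('v::finite \<Rightarrow>\<^sub>0 nat) set"
  shows "\<exists>G. finite G \<and> G \<subseteq> M \<and> (\<forall>u\<in>M. \<exists>g\<in>G. ple g u)"
proof -
  define Mn where "Mn = {u\<in>M. \<forall>v\<in>M. ple v u \<longrightarrow> v = u}"
  have fin: "finite Mn"
  proof (rule ccontr)
    assume "infinite Mn"
    then obtain f :: "nat \<Rightarrow> _" where f: "inj f" "range f \<subseteq> Mn"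
      using infinite_countable_subset by blast
    obtain i j where ij: "i < j" "ple (f i) (f j)" using dickson_good[of f] by blast
    then have "f i = f j" using f(2) unfolding Mn_def by blast
    then show False using f(1) ij(1) by (auto dest: injD)
  qed
  have "\<forall>u\<in>M. \<exists>g\<in>Mn. ple g u"
  proof
    fix u assume "u \<in> M"
    then show "\<exists>g\<in>Mn. ple g u"
    proof (induction "psize u" arbitrary: u rule: less_induct)
      case less
      show ?case
      proof (cases "u \<in> Mn")
        case True then show ?thesis by (auto simp: ple_def)
      next
        case False
        then obtain v where v: "v \<in> M" "ple v u" "v \<noteq> u" using less.prems unfolding Mn_def by blast
        then obtain g where "g \<in> Mn" "ple g v" using less.hyps[of v] ple_psize by blast
        then show ?thesis using v(2) unfolding ple_def by (meson order_trans)
      qed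
    qed
  qed
  then show ?thesis using fin by (intro exI[of _ Mn]) (auto simp: Mn_def)
qed



lemma mme_add: "mat_mult_exp M (a + b) = mat_mult_exp M a + mat_mult_exp M b"
  unfolding mat_mult_exp_def
  by (simp add: vec_eq_iff lookup_add distrib_left sum.distrib)

lemma wdeg_add: "wdeg w (a + b) = wdeg w a + wdeg w b"
  unfolding wdeg_def
  by (simp add: lookup_add distrib_left sum.distrib)

lemma sum_option: "(\<Sum>j\<in>(UNIV::'a::finite option set). f j) = f None + (\<Sum>i\<in>UNIV. f (Some i))"
proof -
  have "(\<Sum>j\<in>(UNIV::'a option set). f j) = (\<Sum>j\<in>insert None (range Some). f j)"
    by (subst UNIV_option_conv) (rule refl)
  also have "\<dots> = f None + (\<Sum>i\<in>UNIV. f (Some i))"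
    by (subst sum.insert) (auto simp: sum.reindex)
  finally show ?thesis .
qed

lemma homog_row: "mat_mult_exp (homog_mat A) u $ None = int (psize u)"
  unfolding mat_mult_exp_def homog_mat_def psize_def by simp

lemma fiber_finite:
  fixes A :: "int^('n::finite)^('d::finite)"
  shows "finite {v. mat_mult_exp (homog_mat A) v = c}"
proof -
  define s where "s = nat (c $ None)"
  have sub: "Poly_Mapping.lookup ` {v. mat_mult_exp (homog_mat A) v = c} \<subseteq> {f. \<forall>j. f j \<in> {..s}}"
  proof (rule subsetI)
    fix f assume "f \<in> Poly_Mapping.lookup ` {v. mat_mult_exp (homog_mat A) v = c}"
    then obtain v where vc: "mat_mult_exp (homog_mat A) v = c" and fv: "f = Poly_Mapping.lookup v" by blast
    have "Poly_Mapping.lookup v j \<in> {..s}" for j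
    proof -
    have "psize v = s" using vc homog_row[of A v] unfolding s_def by simp
    moreover have "Poly_Mapping.lookup v j \<le> psize v" unfolding psize_def
      by (rule member_le_sum) auto
    ultimately show "Poly_Mapping.lookup v j \<in> {..s}" by simp
    qed
    then show "f \<in> {f. \<forall>j. f j \<in> {..s}}" using fv by simp
  qed
  have "finite {f::'n option \<Rightarrow> nat. \<forall>j. f j \<in> {..s}}"
    using finite_PiE[of "UNIV :: 'n option set" "\<lambda>_. {..s}"] by (simp add: PiE_UNIV_domain Pi_def)
  then have "finite (Poly_Mapping.lookup ` {v. mat_mult_exp (homog_mat A) v = c})"
    using sub finite_subset by blast
  moreover have "inj Poly_Mapping.lookup" by (auto intro: injI poly_mapping_eqI)
  ultimately show ?thesis by (meson finite_imageD inj_on_subset subset_UNIV)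
qed

lemma generic_exists:
  "\<exists>q::real^'n::finite. \<forall>c::int^'n. c \<noteq> 0 \<longrightarrow> (\<Sum>j\<in>UNIV. q $ j * real_of_int (c $ j)) \<noteq> 0"
proof -
  define H where "H c = {x::real^'n. (\<chi> j. real_of_int (c $ j)) \<bullet> x = 0}" for c :: "int^'n"
  have neg: "negligible (H c)" if "c \<noteq> 0" for c
  proof -
    have "(\<chi> j. real_of_int (c $ j)) \<noteq> 0" using that by (auto simp: vec_eq_iff)
    then show ?thesis unfolding H_def by (intro negligible_hyperplane) simp
  qed
  have "negligible (\<Union> (H ` (UNIV - {0})))"
    by (rule negligible_countable_Union) (auto intro: neg)
  then have "\<Union> (H ` (UNIV - {0})) \<noteq> UNIV" using non_negligible_UNIV by metis
  then obtain q where q: "q \<notin> \<Union> (H ` (UNIV - {0}))" by blast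
  show ?thesis
  proof (intro exI[of _ q] allI impI)
    fix c :: "int^'n" assume "c \<noteq> 0"
    then have "q \<notin> H c" using q by blast
    then show "(\<Sum>j\<in>UNIV. q $ j * real_of_int (c $ j)) \<noteq> 0"
      unfolding H_def by (simp add: inner_vec_def mult.commute)
  qed
qed



definition Mset :: "(('v::finite \<Rightarrow>\<^sub>0 nat) \<Rightarrow> 'c) \<Rightarrow> real^'v \<Rightarrow> ('v \<Rightarrow>\<^sub>0 nat) set" where
  "Mset \<phi> p = {u. \<exists>v. \<phi> v = \<phi> u \<and> wdeg p v < wdeg p u}"

lemma ple_decomp: "ple g u \<Longrightarrow> u = g + (u - g)"
  by (rule poly_mapping_eqI) (simp add: lookup_add lookup_minus ple_def)

lemma ple_add_right: "ple b (b + a)"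
  by (simp add: ple_def lookup_add)

lemma wdeg_cont: "continuous_on UNIV (\<lambda>w. wdeg w a)"
  unfolding wdeg_def by (intro continuous_intros)

lemma init_form_binom:
  fixes u m :: "'v::finite \<Rightarrow>\<^sub>0 nat"
  assumes "wdeg w m < wdeg w u"
  shows "init_form w (monom u - monom m) = monom u"
proof -
  have um: "u \<noteq> m" using assms by auto
  let ?g = "monom u - monom m"
  have lu: "Poly_Mapping.lookup ?g u = 1" using um
    by (simp add: monom_def lookup_minus lookup_single)
  have lm: "Poly_Mapping.lookup ?g m = -1" using um
    by (simp add: monom_def lookup_minus lookup_single)
  have keys: "Poly_Mapping.keys ?g = {u, m}"
    using um by (auto simp: in_keys_iff monom_def lookup_minus lookup_single when_def split: if_splits)
  have mx: "Max (wdeg w ` Poly_Mapping.keys ?g) = wdeg w u"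
    unfolding keys using assms by simp
  have S: "{x \<in> Poly_Mapping.keys ?g. wdeg w x = wdeg w u} = {u}"
    unfolding keys using assms by auto
  show ?thesis unfolding init_form_def Let_def mx S using lu by (simp add: monom_def)
qed

context
  fixes \<phi> :: "('v::finite \<Rightarrow>\<^sub>0 nat) \<Rightarrow> 'c::ab_group_add" and I :: "'v mpoly set" and p :: "real^'v"
  assumes add: "\<And>a b. \<phi> (a + b) = \<phi> a + \<phi> b"
  and finfib: "\<And>c. finite {v. \<phi> v = c}"
  and I_fib: "I \<subseteq> fiberP \<phi>"
  and I_gen: "\<And>u v. \<phi> u = \<phi> v \<Longrightarrow> monom u - monom v \<in> I"
  and gen: "\<And>u v. \<phi> u = \<phi> v \<Longrightarrow> u \<noteq> v \<Longrightarrow> wdeg p u \<noteq> wdeg p v"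
begin

lemma Mset_up: "u \<in> Mset \<phi> p \<Longrightarrow> ple u u' \<Longrightarrow> u' \<in> Mset \<phi> p"
proof -
  assume u: "u \<in> Mset \<phi> p" and le: "ple u u'"
  then obtain v where v: "\<phi> v = \<phi> u" "wdeg p v < wdeg p u" unfolding Mset_def by blast
  have d: "u' = u + (u' - u)" using ple_decomp[OF le] .
  have du: "\<phi> u' = \<phi> u + \<phi> (u' - u)" using add[of u "u' - u"] by (simp only: d[symmetric])
  have wu: "wdeg p u' = wdeg p u + wdeg p (u' - u)" using wdeg_add[of p u "u' - u"] by (simp only: d[symmetric])
  have "\<phi> (v + (u' - u)) = \<phi> u'" using v(1) du add by simp
  moreover have "wdeg p (v + (u' - u)) < wdeg p u'"
    using v(2) wu by (simp add: wdeg_add)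
  ultimately show ?thesis unfolding Mset_def by blast
qed

lemma fiber_min: "\<exists>m. \<phi> m = \<phi> u \<and> (\<forall>x. \<phi> x = \<phi> u \<longrightarrow> wdeg w m \<le> wdeg w x)"
proof -
  let ?F = "{x. \<phi> x = \<phi> u}"
  have fin: "finite (wdeg w ` ?F)" using finfib by simp
  have ne: "wdeg w ` ?F \<noteq> {}" by auto
  obtain m where m: "m \<in> ?F" "wdeg w m = Min (wdeg w ` ?F)"
    using Min_in[OF fin ne] by auto
  have "\<forall>x. \<phi> x = \<phi> u \<longrightarrow> wdeg w m \<le> wdeg w x"
    using m(2) Min_le[OF fin] by auto
  then show ?thesis using m(1) by blast
qed

lemma local_const:
  "\<exists>U. open U \<and> p \<in> U \<and> (\<forall>w\<in>U. init_ideal w I = {f. Poly_Mapping.keys f \<subseteq> Mset \<phi> p})"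
proof -
  let ?M = "Mset \<phi> p"
  obtain G where G: "finite G" "G \<subseteq> ?M" "\<forall>u\<in>?M. \<exists>g\<in>G. ple g u"
    using dickson_finite_basis[of ?M] by blast
  have "\<forall>g\<in>G. \<exists>v. \<phi> v = \<phi> g \<and> wdeg p v < wdeg p g" using G(2) unfolding Mset_def by blast
  then obtain vg where vg: "\<forall>g\<in>G. \<phi> (vg g) = \<phi> g \<and> wdeg p (vg g) < wdeg p g"
    using bchoice[OF \<open>\<forall>g\<in>G. \<exists>v. \<phi> v = \<phi> g \<and> wdeg p v < wdeg p g\<close>] by (elim exE) simp
  define U where "U = {w. \<forall>g\<in>G. wdeg w (vg g) < wdeg w g}"
  have "U = (\<Inter>g\<in>G. {w. wdeg w (vg g) < wdeg w g})" unfolding U_def by auto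
  moreover have "open {w. wdeg w (vg g) < wdeg w g}" for g
    by (rule open_Collect_less) (rule wdeg_cont)+
  ultimately have oU: "open U" using G(1) by (auto intro: open_INT)
  have pU: "p \<in> U" unfolding U_def using vg by auto
  have main: "init_ideal w I = {f. Poly_Mapping.keys f \<subseteq> ?M}" if wU: "w \<in> U" for w
  proof -
    have a: "\<exists>u'. \<phi> u' = \<phi> u \<and> wdeg w u' < wdeg w u" if uM: "u \<in> ?M" for u
    proof -
      obtain g where g: "g \<in> G" "ple g u" using G(3) uM by blast
      have d: "u = g + (u - g)" using ple_decomp[OF g(2)] .
      have du: "\<phi> u = \<phi> g + \<phi> (u - g)" using add[of g "u - g"] by (simp only: d[symmetric])
      have wu: "wdeg w u = wdeg w g + wdeg w (u - g)" using wdeg_add[of w g "u - g"] by (simp only: d[symmetric])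
      have "\<phi> (vg g + (u - g)) = \<phi> u" using vg g(1) du add by simp
      moreover have "wdeg w (vg g) < wdeg w g" using wU g(1) unfolding U_def by blast
      then have "wdeg w (vg g + (u - g)) < wdeg w u" using wu by (simp add: wdeg_add)
      ultimately show ?thesis by blast
    qed
    have b: "u = v" if "u \<notin> ?M" "v \<notin> ?M" "\<phi> u = \<phi> v" for u v
    proof (rule ccontr)
      assume "u \<noteq> v"
      then have "wdeg p u \<noteq> wdeg p v" using gen that(3) by blast
      then have "wdeg p u < wdeg p v \<or> wdeg p v < wdeg p u" by linarith
      then show False using that unfolding Mset_def by auto
    qed
    have d: "wdeg w u < wdeg w x" if "u \<notin> ?M" "\<phi> x = \<phi> u" "x \<noteq> u" for u x
    proof -
      obtain m where m: "\<phi> m = \<phi> u" "\<forall>x. \<phi> x = \<phi> u \<longrightarrow> wdeg w m \<le> wdeg w x"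
        using fiber_min by blast
      have "m \<notin> ?M"
      proof
        assume "m \<in> ?M"
        then obtain m' where "\<phi> m' = \<phi> m" "wdeg w m' < wdeg w m" using a by blast
        then show False using m by force
      qed
      then have mu: "m = u" using b that(1) m(1) by blast
      have "x \<in> ?M" using b that by metis
      then obtain x' where "\<phi> x' = \<phi> x" "wdeg w x' < wdeg w x" using a by blast
      then show ?thesis using m mu that(2) by force
    qed
    have e: "\<exists>m. \<phi> m = \<phi> u \<and> wdeg w m < wdeg w u" if "u \<in> ?M" for u
    proof -
      obtain m where m: "\<phi> m = \<phi> u" "\<forall>x. \<phi> x = \<phi> u \<longrightarrow> wdeg w m \<le> wdeg w x"
        using fiber_min by blast
      have "m \<notin> ?M"
      proof
        assume "m \<in> ?M"
        then obtain m' where "\<phi> m' = \<phi> m" "wdeg w m' < wdeg w m" using a by blast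
        then show False using m by force
      qed
      moreover have "m \<noteq> u" using that \<open>m \<notin> ?M\<close> by blast
      ultimately show ?thesis using d m(1) by metis
    qed
    define J where "J = {f :: 'v mpoly. Poly_Mapping.keys f \<subseteq> ?M}"
    have idJ: "is_ideal J"
      unfolding is_ideal_def J_def
    proof (intro conjI ballI allI)
      show "0 \<in> {f :: 'v mpoly. Poly_Mapping.keys f \<subseteq> ?M}" by simp
    next
      fix a b :: "'v mpoly" assume "a \<in> {f. Poly_Mapping.keys f \<subseteq> ?M}" "b \<in> {f. Poly_Mapping.keys f \<subseteq> ?M}"
      then show "a + b \<in> {f. Poly_Mapping.keys f \<subseteq> ?M}" using keys_add[of a b] by auto
    next
      fix r a :: "'v mpoly" assume ak: "a \<in> {f. Poly_Mapping.keys f \<subseteq> ?M}"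
      have "Poly_Mapping.keys (r * a) \<subseteq> ?M"
      proof
        fix x assume "x \<in> Poly_Mapping.keys (r * a)"
        then obtain c b where "x = c + b" "b \<in> Poly_Mapping.keys a" using keys_mult[of r a] by blast
        moreover have "ple b (b + c)" by (rule ple_add_right)
        ultimately show "x \<in> ?M" using ak Mset_up by (auto simp: add.commute)
      qed
      then show "r * a \<in> {f. Poly_Mapping.keys f \<subseteq> ?M}" by simp
    qed
    have sub1: "init_ideal w I \<subseteq> J"
      unfolding init_ideal_def
    proof (rule ideal_gen_least[OF idJ], rule subsetI)
      fix h assume "h \<in> init_form w ` I"
      then obtain f where f: "f \<in> I" "h = init_form w f" by blast
      define mx where "mx = Max (wdeg w ` Poly_Mapping.keys f)"
      have hk: "Poly_Mapping.keys h \<subseteq> {u \<in> Poly_Mapping.keys f. wdeg w u = mx}"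
        unfolding f(2) init_form_def Let_def mx_def[symmetric]
        by (rule order_trans[OF keys_sum]) auto
      have "u \<in> ?M" if u: "u \<in> Poly_Mapping.keys f" "wdeg w u = mx" for u
      proof (rule ccontr)
        assume uM: "u \<notin> ?M"
        have "Lc \<phi> (\<phi> u) f = 0" using f(1) I_fib unfolding fiberP_def by blast
        then have "(\<Sum>x\<in>Poly_Mapping.keys f. if \<phi> x = \<phi> u then Poly_Mapping.lookup f x else 0) = 0"
          unfolding Lc_def .
        then have "Poly_Mapping.lookup f u + (\<Sum>x\<in>Poly_Mapping.keys f - {u}. if \<phi> x = \<phi> u then Poly_Mapping.lookup f x else 0) = 0"
          using u(1) by (simp add: sum.remove)
        moreover have "Poly_Mapping.lookup f u \<noteq> 0" using u(1) by (simp add: in_keys_iff)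
        ultimately have nz: "(\<Sum>x\<in>Poly_Mapping.keys f - {u}. if \<phi> x = \<phi> u then Poly_Mapping.lookup f x else 0) \<noteq> 0"
          by auto
        have "\<exists>x\<in>Poly_Mapping.keys f - {u}. \<phi> x = \<phi> u"
        proof (rule ccontr)
          assume "\<not> (\<exists>x\<in>Poly_Mapping.keys f - {u}. \<phi> x = \<phi> u)"
          then have "(\<Sum>x\<in>Poly_Mapping.keys f - {u}. if \<phi> x = \<phi> u then Poly_Mapping.lookup f x else 0) = 0"
            by (intro sum.neutral) auto
          with nz show False by contradiction
        qed
        then obtain x where x: "x \<in> Poly_Mapping.keys f - {u}" "\<phi> x = \<phi> u"
          by blast
        then have "wdeg w u < wdeg w x" using d uM by blast
        moreover have "wdeg w x \<le> mx" unfolding mx_def using x(1) by (intro Max_ge) auto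
        ultimately show False using u(2) by simp
      qed
      then show "h \<in> J" unfolding J_def using hk by blast
    qed
    have mon: "monom u \<in> init_ideal w I" if uM: "u \<in> ?M" for u
    proof -
      obtain m where m: "\<phi> m = \<phi> u" "wdeg w m < wdeg w u" using e[OF uM] by blast
      have "monom u - monom m \<in> I" by (rule I_gen[OF m(1)[symmetric]])
      then have "init_form w (monom u - monom m) \<in> init_form w ` I" by blast
      then have "monom u \<in> init_form w ` I" by (simp only: init_form_binom[OF m(2)])
      then show ?thesis unfolding init_ideal_def by (rule subsetD[OF ideal_gen_sub])
    qed
    have sub2: "J \<subseteq> init_ideal w I"
    proof
      fix f assume "f \<in> J"
      then have fk: "Poly_Mapping.keys f \<subseteq> ?M" unfolding J_def by simp
      have id: "is_ideal (init_ideal w I)" unfolding init_ideal_def by (rule is_ideal_ideal_gen)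
      have "(\<Sum>u\<in>Poly_Mapping.keys f. Poly_Mapping.single u (Poly_Mapping.lookup f u)) \<in> init_ideal w I"
      proof (rule is_ideal_sum[OF id], simp, rule ballI)
        fix u assume "u \<in> Poly_Mapping.keys f"
        then have "monom u \<in> init_ideal w I" using fk mon by blast
        then have "Poly_Mapping.single 0 (Poly_Mapping.lookup f u) * monom u \<in> init_ideal w I"
          using id unfolding is_ideal_def by blast
        then show "Poly_Mapping.single u (Poly_Mapping.lookup f u) \<in> init_ideal w I"
          by (simp add: monom_def mult_single)
      qed
      with poly_expand[of f] show "f \<in> init_ideal w I"
        by (rule ssubst[where P="\<lambda>x. x \<in> init_ideal w I"])
    qed
    show ?thesis using sub1 sub2 unfolding J_def by blast
  qed
  show ?thesis using oU pU main by blast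
qed

end


lemma toric_fib:
  fixes M :: "int^'v::finite^'r::finite"
  shows "toric_ideal M \<subseteq> fiberP (mat_mult_exp M)"
  unfolding toric_ideal_def
proof (rule ideal_gen_least)
  show "is_ideal (fiberP (mat_mult_exp M) :: 'v mpoly set)"
    by (rule is_ideal_fiberP) (rule mme_add)
  show "{monom u - monom v |u v. mat_mult_exp M u = mat_mult_exp M v} \<subseteq> fiberP (mat_mult_exp M)"
  proof (rule subsetI)
    fix x assume "x \<in> {monom u - monom v |u v. mat_mult_exp M u = mat_mult_exp M v}"
    then obtain u v where x: "x = monom u - monom v" and e: "mat_mult_exp M u = mat_mult_exp M v"
      by blast
    show "x \<in> fiberP (mat_mult_exp M)" unfolding fiberP_def x
      by (simp add: Lc_diff monom_def Lc_single e)
  qed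
qed

lemma toric_gen:
  "mat_mult_exp M u = mat_mult_exp M v \<Longrightarrow> monom u - monom v \<in> toric_ideal M"
  unfolding toric_ideal_def by (rule subsetD[OF ideal_gen_sub]) blast

lemma wdeg_p:
  fixes q :: "real^'n::finite"
  defines "p \<equiv> (\<chi> j. case j of None \<Rightarrow> 0 | Some i \<Rightarrow> q $ i) :: real^('n option)"
  shows "wdeg p u = (\<Sum>i\<in>UNIV. q $ i * real (Poly_Mapping.lookup u (Some i)))"
  unfolding wdeg_def p_def by (subst sum_option) simp

lemma psize_option: "psize u = Poly_Mapping.lookup u None + (\<Sum>i\<in>UNIV. Poly_Mapping.lookup u (Some i))"
  unfolding psize_def by (rule sum_option)

lemma dim_vec: "DIM(real^'n::finite) = CARD('n)"
  by (simp only: DIM_cart DIM_real mult_1_right)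

lemma generic_p:
  fixes A :: "int^('n::finite)^('d::finite)" and q :: "real^'n"
  assumes q: "\<forall>c::int^'n. c \<noteq> 0 \<longrightarrow> (\<Sum>j\<in>UNIV. q $ j * real_of_int (c $ j)) \<noteq> 0"
  defines "p \<equiv> (\<chi> j. case j of None \<Rightarrow> 0 | Some i \<Rightarrow> q $ i) :: real^('n option)"
  assumes eq: "mat_mult_exp (homog_mat A) u = mat_mult_exp (homog_mat A) v"
    and ne: "u \<noteq> v"
  shows "wdeg p u \<noteq> wdeg p v"
proof
  assume weq: "wdeg p u = wdeg p v"
  define c where "c = (\<chi> i. int (Poly_Mapping.lookup u (Some i)) - int (Poly_Mapping.lookup v (Some i)))"
  have "(\<Sum>i\<in>UNIV. q $ i * real_of_int (c $ i)) =
        (\<Sum>i\<in>UNIV. q $ i * real (Poly_Mapping.lookup u (Some i))) - (\<Sum>i\<in>UNIV. q $ i * real (Poly_Mapping.lookup v (Some i)))"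
    unfolding c_def by (simp add: sum_subtractf[symmetric] algebra_simps)
  also have "\<dots> = 0" using weq unfolding p_def wdeg_p by simp
  finally have "c = 0" using q by blast
  then have s: "Poly_Mapping.lookup u (Some i) = Poly_Mapping.lookup v (Some i)" for i
    unfolding c_def by (simp add: vec_eq_iff)
  have "int (psize u) = int (psize v)" using homog_row[of A u] homog_row[of A v] eq by simp
  then have "psize u = psize v" by simp
  then have "Poly_Mapping.lookup u None = Poly_Mapping.lookup v None"
    unfolding psize_option using s by simp
  then have "u = v" using s by (intro poly_mapping_eqI) (case_tac k, auto)
  then show False using ne by simp
qed



theorem mainTheorem2:
  fixes A :: "int^('n::finite)^('d::finite)" and \<epsilon> :: real
  assumes "rank (map_matrix real_of_int A) = CARD('d)"
    and "\<epsilon> > 0"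
  shows "\<exists>v :: real^('n option). v $ None = 0 \<and>
           (\<exists>C \<in> groebner_cones (toric_ideal (homog_mat A)).
              maximal_dim C \<and> homog_weight + \<epsilon> *\<^sub>R v \<in> interior C)"
proof -
  obtain q :: "real^'n" where q: "\<forall>c::int^'n. c \<noteq> 0 \<longrightarrow> (\<Sum>j\<in>UNIV. q $ j * real_of_int (c $ j)) \<noteq> 0"
    using generic_exists by blast
  define p :: "real^('n option)" where "p = (\<chi> j. case j of None \<Rightarrow> 0 | Some i \<Rightarrow> q $ i)"
  let ?\<phi> = "mat_mult_exp (homog_mat A)"
  let ?I = "toric_ideal (homog_mat A)"
  have gen: "\<And>u v. ?\<phi> u = ?\<phi> v \<Longrightarrow> u \<noteq> v \<Longrightarrow> wdeg p u \<noteq> wdeg p v"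
    unfolding p_def by (rule generic_p[OF q])
  have I_gen: "\<And>u v. ?\<phi> u = ?\<phi> v \<Longrightarrow> monom u - monom v \<in> ?I"
    by (rule toric_gen)
  have finfib: "\<And>c. finite {v. ?\<phi> v = c}" by (rule fiber_finite)
  obtain U where U: "open U" "p \<in> U" "\<forall>w\<in>U. init_ideal w ?I = {f. Poly_Mapping.keys f \<subseteq> Mset ?\<phi> p}"
    using local_const[of ?\<phi> ?I p, OF mme_add finfib toric_fib I_gen gen] by blast
  define C where "C = groebner_cone ?I p"
  have "U \<subseteq> C" unfolding C_def groebner_cone_def using U(2,3) by auto
  then have pint: "p \<in> interior C" using U(1,2) by (rule interiorI[rotated 2])
  then have "aff_dim C = int DIM(real^('n option))"
    by (intro aff_dim_nonempty_interior) blast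
  then have md: "maximal_dim C" unfolding maximal_dim_def by (simp only: dim_vec)
  have Cin: "C \<in> groebner_cones ?I" unfolding C_def groebner_cones_def by simp
  define v where "v = (1 / \<epsilon>) *\<^sub>R (p - homog_weight)"
  have hw: "(homog_weight :: real^('n option)) $ None = 0" unfolding homog_weight_def by simp
  have v0: "v $ None = 0" unfolding v_def p_def using hw by simp
  have "homog_weight + \<epsilon> *\<^sub>R v = p" unfolding v_def using assms(2) by simp
  then show ?thesis using v0 md Cin pint by metis
qed


end
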